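(* Let $n\geq 3$ and let $V\subset\overline{\Pi}_n$ be the set of partitions $v_k=\{\{1,k\},\{2\},\dots,\widehat{\{k\}},\dots,\{n\}\}$, $k\in\{2,\dots,n\}$ (the block containing $1$ has exactly two elements and all other blocks are singletons). Let $F_0$ be the subposet of the face poset of $\Delta(\overline{\Pi}_n)$ consisting of all simplices having no vertex in $V$. Then there exists an $(S_1\times S_{n-1})$-equivariant acyclic matching on $F_0$ whose only critical simplex is the vertex $\alpha_n=\{\{1\},\{2,\dots,n\}\}$.
   Context: $\Pi_n$ is the poset of set partitions of $[n]$ ordered by refinement (finer is smaller); $\overline{\Pi}_n$ is obtained by removing its minimum and maximum. $\Delta(\overline{\Pi}_n)$ is the order complex: simplices are nonempty chains of $\overline{\Pi}_n$, vertices are elements of $\overline{\Pi}_n$, and the face poset is the set of simplices ordered by inclusion. $S_1\times S_{n-1}=\{\sigma\in S_n\mid \sigma(1)=1\}$ acts naturally (via its action on $[n]$). A partial matching on a poset is a set of pairs $(a,b)$ with $b$ covering $a$, each element in at most one pair; acyclic means no cycle $b_1>a_1<b_2>\dots<b_t>a_t<b_1$, $t\ge 2$, distinct $b_i$, $(a_i,b_i)$ matched; critical elements are unmatched ones; $H$-equivariant means $(a,b)$ matched implies $(ha,hb)$ matched for all $h\in H$. *)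

theory Defs
  imports "HOL-Library.Disjoint_Sets" "HOL-Combinatorics.Permutations"
begin

definition setpart :: "nat \<Rightarrow> nat set set set" where
  "setpart n = {P. partition_on {1..n} P}"

definition refines :: "nat set set \<Rightarrow> nat set set \<Rightarrow> bool" where
  "refines P Q \<longleftrightarrow> (\<forall>B\<in>P. \<exists>C\<in>Q. B \<subseteq> C)"

definition minpart :: "nat \<Rightarrow> nat set set" where
  "minpart n = (\<lambda>i. {i}) ` {1..n}"

definition maxpart :: "nat \<Rightarrow> nat set set" where
  "maxpart n = {{1..n}}"

definition proper_part :: "nat \<Rightarrow> nat set set set" where
  "proper_part n = setpart n - {minpart n, maxpart n}"

text \<open>Simplices of the order complex: nonempty chains of the proper part.\<close>
definition simplices :: "nat \<Rightarrow> nat set set set set" where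
  "simplices n = {S. S \<noteq> {} \<and> S \<subseteq> proper_part n \<and>
                     (\<forall>x\<in>S. \<forall>y\<in>S. refines x y \<or> refines y x)}"

definition vpart :: "nat \<Rightarrow> nat \<Rightarrow> nat set set" where
  "vpart n k = insert {1, k} ((\<lambda>i. {i}) ` ({2..n} - {k}))"

definition Vset :: "nat \<Rightarrow> nat set set set" where
  "Vset n = vpart n ` {2..n}"

text \<open>F_0: simplices with no vertex in V (ordered by inclusion).\<close>
definition F0 :: "nat \<Rightarrow> nat set set set set" where
  "F0 n = {S \<in> simplices n. S \<inter> Vset n = {}}"

definition alpha :: "nat \<Rightarrow> nat set set" where
  "alpha n = {{1}, {2..n}}"

definition covers_in :: "'a set set \<Rightarrow> 'a set \<Rightarrow> 'a set \<Rightarrow> bool" where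
  "covers_in X a b \<longleftrightarrow> a \<in> X \<and> b \<in> X \<and> a \<subset> b \<and> \<not> (\<exists>c\<in>X. a \<subset> c \<and> c \<subset> b)"

definition partial_matching :: "'a set set \<Rightarrow> ('a set \<times> 'a set) set \<Rightarrow> bool" where
  "partial_matching X M \<longleftrightarrow>
     (\<forall>(a,b)\<in>M. covers_in X a b) \<and>
     (\<forall>p\<in>M. \<forall>q\<in>M. p \<noteq> q \<longrightarrow> {fst p, snd p} \<inter> {fst q, snd q} = {})"

definition acyclic_matching :: "('a set \<times> 'a set) set \<Rightarrow> bool" where
  "acyclic_matching M \<longleftrightarrow>
     \<not> (\<exists>t::nat. \<exists>a b :: nat \<Rightarrow> 'a set. t \<ge> 2 \<and> inj_on b {..<t} \<and>
          (\<forall>i<t. (a i, b i) \<in> M \<and> a i \<subset> b ((i + 1) mod t)))"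

definition critical :: "'a set set \<Rightarrow> ('a set \<times> 'a set) set \<Rightarrow> 'a set set" where
  "critical X M = {x \<in> X. \<forall>(a,b)\<in>M. x \<noteq> a \<and> x \<noteq> b}"

text \<open>The group S_1 \<times> S_{n-1}: permutations of [n] fixing 1; action on simplices.\<close>
definition stab1 :: "nat \<Rightarrow> (nat \<Rightarrow> nat) set" where
  "stab1 n = {\<sigma>. \<sigma> permutes {1..n} \<and> \<sigma> 1 = 1}"

definition act_part :: "(nat \<Rightarrow> nat) \<Rightarrow> nat set set \<Rightarrow> nat set set" where
  "act_part \<sigma> P = (\<lambda>B. \<sigma> ` B) ` P"

definition act_simp :: "(nat \<Rightarrow> nat) \<Rightarrow> nat set set set \<Rightarrow> nat set set set" where
  "act_simp \<sigma> S = act_part \<sigma> ` S"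

definition equivariant_matching ::
  "(nat \<Rightarrow> nat) set \<Rightarrow> (nat set set set \<times> nat set set set) set \<Rightarrow> bool" where
  "equivariant_matching H M \<longleftrightarrow>
     (\<forall>\<sigma>\<in>H. \<forall>(a,b)\<in>M. (act_simp \<sigma> a, act_simp \<sigma> b) \<in> M)"

end

theory Submission
  imports Defs
begin


lemma refines_refl: "refines P P" unfolding refines_def by blast
lemma refines_trans: "refines P Q \<Longrightarrow> refines Q R \<Longrightarrow> refines P R"
  unfolding refines_def by (meson order_trans)

lemma part_block_unique:
  assumes "partition_on A P" "B \<in> P" "C \<in> P" "x \<in> B" "x \<in> C" shows "B = C"
  using assms unfolding partition_on_def disjoint_def by blast

lemma refines_antisym:
  assumes P: "partition_on A P" and Q: "partition_on A Q"
    and "refines P Q" "refines Q P" shows "P = Q"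
proof -
  have 1: "B \<in> Q" if h: "B \<in> P" "partition_on A P" "partition_on A Q" "refines P Q" "refines Q P" for B P Q
  proof -
    obtain C where C: "C \<in> Q" "B \<subseteq> C" using h unfolding refines_def by blast
    obtain B' where B': "B' \<in> P" "C \<subseteq> B'" using h C unfolding refines_def by blast
    have "B \<noteq> {}" using h partition_onD3 by blast
    then obtain x where "x \<in> B" by blast
    then have "B = B'" using part_block_unique[OF h(2) h(1) B'(1)] C B' by blast
    then have "B = C" using C B' by blast
    then show ?thesis using C by simp
  qed
  show ?thesis using 1[OF _ P Q assms(3,4)] 1[OF _ Q P assms(4,3)] by blast
qed

lemma part_sub: "partition_on {1..n} P \<Longrightarrow> P \<subseteq> Pow {1..n}"
  unfolding partition_on_def by blast

lemma refines_max: "partition_on {1..n} P \<Longrightarrow> refines P (maxpart n)"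
  unfolding refines_def maxpart_def partition_on_def by blast

definition rr :: "nat set set \<Rightarrow> nat set set" where
  "rr P = insert {1} ((\<lambda>B. B - {1}) ` P - {{}})"

lemma rr_part: assumes "partition_on {1..n} P" "n \<ge> 1" shows "partition_on {1..n} (rr P)"
proof (rule partition_onI)
  show "\<Union> (rr P) = {1..n}" using assms partition_onD1[OF assms(1)] unfolding rr_def by auto
  show "{} \<notin> rr P" unfolding rr_def by auto
  have D: "p \<inter> q = {}" if pq: "p \<in> rr P" "q \<in> rr P" "p \<noteq> q" "p \<noteq> {1}" for p q
  proof -
    obtain B where B: "B \<in> P" "p = B - {1}" using pq(1,4) unfolding rr_def by blast
    show ?thesis
    proof (cases "q = {1}")
      case True then show ?thesis using B by blast
    next
      case False
      obtain C where C: "C \<in> P" "q = C - {1}" using pq(2) False unfolding rr_def by blast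
      have "B \<noteq> C" using B C pq(3) by blast
      then have "B \<inter> C = {}" using B(1) C(1) partition_onD2[OF assms(1)] unfolding disjoint_def by blast
      then show ?thesis using B C by blast
    qed
  qed
  fix p q assume pq: "p \<in> rr P" "q \<in> rr P" "p \<noteq> q"
  show "disjnt p q"
  proof (cases "p = {1}")
    case True
    then have "q \<noteq> {1}" using pq by blast
    then have "q \<inter> p = {}" using D[OF pq(2) pq(1)] pq(3) by blast
    then show ?thesis unfolding disjnt_def by blast
  next
    case False then show ?thesis using D[OF pq] unfolding disjnt_def by blast
  qed
qed

lemma one_rr: "{1} \<in> rr P" unfolding rr_def by simp

lemma rr_refines: assumes "partition_on {1..n} P" "n \<ge> 1" shows "refines (rr P) P"
  unfolding refines_def
proof
  fix B assume "B \<in> rr P"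
  show "\<exists>C\<in>P. B \<subseteq> C"
  proof (cases "B = {1}")
    case True
    have "1 \<in> \<Union>P" using partition_onD1[OF assms(1)] assms(2) by auto
    then show ?thesis using True by auto
  next
    case False
    then show ?thesis using \<open>B \<in> rr P\<close> unfolding rr_def by auto
  qed
qed

lemma refines_rr: assumes X: "partition_on {1..n} X" and "{1} \<in> X" "refines X P"
  shows "refines X (rr P)"
  unfolding refines_def
proof
  fix B assume B: "B \<in> X"
  show "\<exists>C\<in>rr P. B \<subseteq> C"
  proof (cases "B = {1}")
    case True then show ?thesis using one_rr by blast
  next
    case False
    have "1 \<notin> B" using part_block_unique[OF X B assms(2)] False by auto
    obtain C where C: "C \<in> P" "B \<subseteq> C" using assms(3) B unfolding refines_def by blast
    have "B \<noteq> {}" using B partition_onD3[OF X] by blast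
    have sub: "B \<subseteq> C - {1}" using C \<open>1 \<notin> B\<close> by blast
    then have "C - {1} \<noteq> {}" using \<open>B \<noteq> {}\<close> by blast
    then have "C - {1} \<in> rr P" using C(1) unfolding rr_def by blast
    then show ?thesis using sub by blast
  qed
qed

lemma rr_not_max: assumes "n \<ge> 2" shows "rr P \<noteq> maxpart n"
proof
  assume "rr P = maxpart n"
  then have "{1} = {1..n}" using one_rr[of P] unfolding maxpart_def by simp
  moreover have "2 \<in> {1..n}" using assms by simp
  ultimately have "(2::nat) \<in> {1}" by simp
  then show False by simp
qed

lemma rr_max: "n \<ge> 2 \<Longrightarrow> rr (maxpart n) = alpha n"
  unfolding rr_def maxpart_def alpha_def by auto

lemma alpha_not_min: "n \<ge> 3 \<Longrightarrow> alpha n \<noteq> minpart n"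
proof
  assume "n \<ge> 3" "alpha n = minpart n"
  then have "{2..n} \<in> minpart n" unfolding alpha_def by auto
  then obtain i where "{2..n} = {i}" unfolding minpart_def by auto
  then have "2 \<in> {i}" "3 \<in> {i}" using \<open>n\<ge>3\<close> by (auto simp: set_eq_iff)
  then show False by simp
qed

lemma one_notin_vpart: "k \<ge> 2 \<Longrightarrow> {1} \<notin> vpart n k"
  unfolding vpart_def by (auto simp: doubleton_eq_iff)

lemma rr_not_V: "rr P \<notin> Vset n"
proof
  assume "rr P \<in> Vset n"
  then obtain k where "k \<in> {2..n}" "rr P = vpart n k" unfolding Vset_def by blast
  then show False using one_rr[of P] one_notin_vpart[of k n] by simp
qed

lemma down_one: assumes P: "partition_on {1..n} P" and Q: "partition_on {1..n} Q"
  and "n \<ge> 1" "refines P Q" "{1} \<in> Q" shows "{1} \<in> P"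
proof -
  have "1 \<in> \<Union>P" using partition_onD1[OF P] assms(3) by auto
  then obtain B where B: "B \<in> P" "1 \<in> B" by blast
  obtain C where C: "C \<in> Q" "B \<subseteq> C" using assms(4) B unfolding refines_def by blast
  have "C = {1}" using part_block_unique[OF Q C(1) assms(5)] B C by auto
  then have "B = {1}" using B C by auto
  then show ?thesis using B by simp
qed




lemma rr_not_min:
  assumes P: "partition_on {1..n} P" and n: "n \<ge> 2" and one: "{1} \<notin> P" and V: "P \<notin> Vset n"
  shows "rr P \<noteq> minpart n"
proof
  assume eq: "rr P = minpart n"
  have sing: "\<exists>i\<in>{1..n}. C - {1} = {i}" if "C \<in> P" "C - {1} \<noteq> {}" for C
  proof -
    have "C - {1} \<in> rr P" using that unfolding rr_def by blast
    then show ?thesis using eq unfolding minpart_def by blast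
  qed
  have "1 \<in> \<Union>P" using partition_onD1[OF P] n by auto
  then obtain B where B: "B \<in> P" "1 \<in> B" by blast
  have "B \<noteq> {1}" using B one by blast
  then have "B - {1} \<noteq> {}" using B by blast
  then obtain k where k: "k \<in> {1..n}" "B - {1} = {k}" using sing B by blast
  have k1: "k \<noteq> 1" using k by blast
  have Bk: "B = {1, k}" using k B by blast
  have k2: "k \<in> {2..n}" using k k1 by auto
  have other: "\<exists>i. C = {i} \<and> i \<in> {2..n} - {k}" if C: "C \<in> P" "C \<noteq> B" for C
  proof -
    have "1 \<notin> C" using part_block_unique[OF P C(1) B(1)] B C by blast
    have "k \<notin> C" using part_block_unique[OF P C(1) B(1)] Bk C by blast
    have "C \<noteq> {}" using C partition_onD3[OF P] by blast
    have "C - {1} = C" using \<open>1 \<notin> C\<close> by blast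
    then obtain i where i: "i \<in> {1..n}" "C = {i}" using sing[OF C(1)] \<open>C \<noteq> {}\<close> by auto
    then show ?thesis using \<open>1 \<notin> C\<close> \<open>k \<notin> C\<close> by auto
  qed
  have "P = vpart n k"
  proof
    show "P \<subseteq> vpart n k"
    proof
      fix C assume C: "C \<in> P"
      show "C \<in> vpart n k"
      proof (cases "C = B")
        case True then show ?thesis using Bk unfolding vpart_def by simp
      next
        case False then show ?thesis using other[OF C False] unfolding vpart_def by blast
      qed
    qed
    show "vpart n k \<subseteq> P"
    proof
      fix C assume "C \<in> vpart n k"
      then consider "C = {1,k}" | i where "i \<in> {2..n} - {k}" "C = {i}" unfolding vpart_def by blast
      then show "C \<in> P"
      proof cases
        case 1 then show ?thesis using B Bk by simp
      next
        case (2 i)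
        then have "i \<in> \<Union>P" using partition_onD1[OF P] by auto
        then obtain D where D: "D \<in> P" "i \<in> D" by blast
        have "D \<noteq> B" using D 2 Bk by auto
        then obtain j where "D = {j}" using other[OF D(1)] by blast
        then show ?thesis using D 2 by simp
      qed
    qed
  qed
  then have "P \<in> Vset n" using k2 unfolding Vset_def by blast
  then show False using V by simp
qed

definition UL :: "nat set set set \<Rightarrow> nat set set set" where
  "UL S = {P \<in> S. {1} \<notin> P}"

definition W :: "nat \<Rightarrow> nat set set set \<Rightarrow> nat set set set" where
  "W n S = insert (maxpart n) (UL S)"

definition mn :: "nat \<Rightarrow> nat set set set \<Rightarrow> nat set set" where
  "mn n S = (THE m. m \<in> W n S \<and> (\<forall>x\<in>W n S. refines m x))"

definition key :: "nat \<Rightarrow> nat set set set \<Rightarrow> nat set set" where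
  "key n S = rr (mn n S)"

lemma chain_min:
  assumes "finite X" "X \<noteq> {}" "\<forall>x\<in>X. \<forall>y\<in>X. refines x y \<or> refines y x"
  shows "\<exists>m\<in>X. \<forall>x\<in>X. refines m x"
  using assms
proof (induction X rule: finite_ne_induct)
  case (singleton x) then show ?case using refines_refl by blast
next
  case (insert x F)
  then obtain m where m: "m \<in> F" "\<forall>y\<in>F. refines m y" by blast
  show ?case
  proof (cases "refines x m")
    case True then show ?thesis using m refines_refl refines_trans by blast
  next
    case False
    then have "refines m x" using insert.prems m by blast
    then show ?thesis using m by blast
  qed
qed

lemma simplices_part: "S \<in> simplices n \<Longrightarrow> x \<in> S \<Longrightarrow> partition_on {1..n} x"
  unfolding simplices_def proper_part_def setpart_def by blast

lemma simplices_finite: assumes "S \<in> simplices n" shows "finite S"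
proof -
  have "S \<subseteq> Pow (Pow {1..n})" using simplices_part[OF assms] part_sub by blast
  then show ?thesis by (rule finite_subset) simp
qed

lemma W_props: assumes "S \<in> simplices n"
  shows "finite (W n S)" "W n S \<noteq> {}" "\<And>x. x \<in> W n S \<Longrightarrow> partition_on {1..n} x"
    "\<forall>x\<in>W n S. \<forall>y\<in>W n S. refines x y \<or> refines y x"
proof -
  show "finite (W n S)" using simplices_finite[OF assms] unfolding W_def UL_def by simp
  show "W n S \<noteq> {}" unfolding W_def by simp
  have mp: "partition_on {1..n} (maxpart n)" if "n \<ge> 1"
    unfolding maxpart_def using that by (intro partition_on_space) simp
  have ne: "n \<ge> 1"
  proof -
    obtain x where "x \<in> S" using assms unfolding simplices_def by blast
    then have xp: "x \<in> proper_part n" "partition_on {1..n} x" using assms simplices_part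
      unfolding simplices_def by blast+
    show ?thesis
    proof (rule ccontr)
      assume "\<not> n \<ge> 1" then have "n = 0" by simp
      then have "partition_on {} x" using xp(2) by simp
      then have "x = {}" by (metis partition_on_empty)
      moreover have "minpart n = {}" using \<open>n = 0\<close> unfolding minpart_def by simp
      ultimately show False using xp(1) unfolding proper_part_def by simp
    qed
  qed
  show P: "\<And>x. x \<in> W n S \<Longrightarrow> partition_on {1..n} x"
    using simplices_part[OF assms] mp[OF ne] unfolding W_def UL_def by blast
  show "\<forall>x\<in>W n S. \<forall>y\<in>W n S. refines x y \<or> refines y x"
  proof (intro ballI)
    fix x y assume xy: "x \<in> W n S" "y \<in> W n S"
    show "refines x y \<or> refines y x"
    proof (cases "x = maxpart n \<or> y = maxpart n")
      case True then show ?thesis using refines_max P xy by blast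
    next
      case False then have "x \<in> S" "y \<in> S" using xy unfolding W_def UL_def by auto
      then show ?thesis using assms unfolding simplices_def by blast
    qed
  qed
qed

lemma simplices_n1: assumes "S \<in> simplices n" shows "n \<ge> 1"
proof -
  have "maxpart n \<in> W n S" unfolding W_def by simp
  then have "partition_on {1..n} (maxpart n)" using W_props(3)[OF assms] by blast
  then have "{1..n} \<noteq> {}" unfolding maxpart_def partition_on_def by auto
  then show ?thesis by simp
qed

lemma mn_props: assumes "S \<in> simplices n"
  shows "mn n S \<in> W n S" "\<And>x. x \<in> W n S \<Longrightarrow> refines (mn n S) x" "partition_on {1..n} (mn n S)"
proof -
  note w = W_props[OF assms]
  obtain m where m: "m \<in> W n S" "\<forall>x\<in>W n S. refines m x" using chain_min[OF w(1,2,4)] by blast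
  have ex: "\<exists>!m. m \<in> W n S \<and> (\<forall>x\<in>W n S. refines m x)"
  proof (rule ex1I[of _ m])
    show "m \<in> W n S \<and> (\<forall>x\<in>W n S. refines m x)" using m by blast
    fix m' assume "m' \<in> W n S \<and> (\<forall>x\<in>W n S. refines m' x)"
    then show "m' = m" using refines_antisym[OF w(3) w(3)] m by blast
  qed
  have "mn n S \<in> W n S \<and> (\<forall>x\<in>W n S. refines (mn n S) x)"
    unfolding mn_def by (rule theI'[OF ex])
  then show "mn n S \<in> W n S" "\<And>x. x \<in> W n S \<Longrightarrow> refines (mn n S) x" by blast+
  show "partition_on {1..n} (mn n S)" using w(3) \<open>mn n S \<in> W n S\<close> by blast
qed

lemma mn_unique: assumes "S \<in> simplices n" "m \<in> W n S" "\<And>x. x \<in> W n S \<Longrightarrow> refines m x"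
  shows "mn n S = m"
  using refines_antisym[OF W_props(3)[OF assms(1)] W_props(3)[OF assms(1)]] mn_props[OF assms(1)] assms
  by blast

lemma key_one: "{1} \<in> key n S" unfolding key_def by (rule one_rr)

lemma UL_insert_key: "UL (insert (key n S) S) = UL S"
  using key_one[of n S] unfolding UL_def by auto

lemma UL_remove_key: "UL (S - {key n T}) = UL S"
  using key_one[of n T] unfolding UL_def by auto

lemma key_UL: "UL S = UL T \<Longrightarrow> key n S = key n T"
  unfolding key_def mn_def W_def by simp

lemma mn_UL: "UL S = UL T \<Longrightarrow> mn n S = mn n T"
  unfolding mn_def W_def by simp

lemma key_insert_key: "key n (insert (key n S) S) = key n S"
  by (rule key_UL[OF UL_insert_key])

lemma key_remove_key: "key n (S - {key n S}) = key n S"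
  by (rule key_UL[OF UL_remove_key])

lemma key_part: "S \<in> simplices n \<Longrightarrow> partition_on {1..n} (key n S)"
  unfolding key_def using rr_part mn_props(3) simplices_n1 by blast

lemma key_proper: assumes "S \<in> F0 n" "n \<ge> 3" shows "key n S \<in> proper_part n"
proof -
  have S: "S \<in> simplices n" using assms unfolding F0_def by blast
  have "key n S \<noteq> minpart n"
  proof (cases "mn n S = maxpart n")
    case True then show ?thesis unfolding key_def using rr_max alpha_not_min assms(2) by simp
  next
    case False
    then have "mn n S \<in> UL S" using mn_props(1)[OF S] unfolding W_def by blast
    then have "mn n S \<in> S" "{1} \<notin> mn n S" unfolding UL_def by auto
    then have "mn n S \<notin> Vset n" using assms(1) unfolding F0_def by blast
    then show ?thesis unfolding key_def
      using rr_not_min[OF mn_props(3)[OF S]] assms(2) \<open>{1} \<notin> mn n S\<close> by simp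
  qed
  moreover have "key n S \<noteq> maxpart n" unfolding key_def using rr_not_max assms(2) by simp
  ultimately show ?thesis using key_part[OF S] unfolding proper_part_def setpart_def by simp
qed

lemma key_comp: assumes S: "S \<in> simplices n" and x: "x \<in> S"
  shows "refines x (key n S) \<or> refines (key n S) x"
proof -
  have n1: "n \<ge> 1" using simplices_n1[OF S] .
  have xp: "partition_on {1..n} x" using simplices_part[OF S x] .
  note m = mn_props[OF S]
  show ?thesis
  proof (cases "{1} \<in> x")
    case True
    have "refines x (mn n S)"
    proof (cases "mn n S = maxpart n")
      case True then show ?thesis using refines_max xp by simp
    next
      case False
      then have u: "mn n S \<in> S" "{1} \<notin> mn n S" using m(1) unfolding W_def UL_def by auto
      then have "refines x (mn n S) \<or> refines (mn n S) x" using S x unfolding simplices_def by blast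
      moreover have "\<not> refines (mn n S) x" using down_one[OF m(3) xp n1 _ True] u(2) by blast
      ultimately show ?thesis by blast
    qed
    then show ?thesis unfolding key_def using refines_rr[OF xp True] by blast
  next
    case False
    then have "x \<in> W n S" using x unfolding W_def UL_def by blast
    then have "refines (mn n S) x" using m(2) by blast
    then show ?thesis unfolding key_def using rr_refines[OF m(3) n1] refines_trans by blast
  qed
qed

lemma insert_key_F0: assumes "S \<in> F0 n" "n \<ge> 3" shows "insert (key n S) S \<in> F0 n"
proof -
  have S: "S \<in> simplices n" using assms unfolding F0_def by blast
  have "key n S \<notin> Vset n" unfolding key_def by (rule rr_not_V)
  moreover have "key n S \<in> proper_part n" using key_proper[OF assms] .
  ultimately show ?thesis using assms(1) key_comp[OF S] refines_refl
    unfolding F0_def simplices_def by auto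
qed

lemma F0_sub: assumes "S \<in> F0 n" "T \<subseteq> S" "T \<noteq> {}" shows "T \<in> F0 n"
  using assms unfolding F0_def simplices_def by blast




definition Mt :: "nat \<Rightarrow> (nat set set set \<times> nat set set set) set" where
  "Mt n = {(S, insert (key n S) S) | S. S \<in> F0 n \<and> key n S \<notin> S}"

lemma Mt_D: "(a, b) \<in> Mt n \<Longrightarrow> a \<in> F0 n \<and> key n a \<notin> a \<and> b = insert (key n a) a"
  unfolding Mt_def by blast

lemma Mt_partial: assumes "n \<ge> 3" shows "partial_matching (F0 n) (Mt n)"
  unfolding partial_matching_def
proof (intro conjI ballI)
  fix p assume "p \<in> Mt n"
  then obtain S where S: "S \<in> F0 n" "key n S \<notin> S" "p = (S, insert (key n S) S)" unfolding Mt_def by blast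
  have "insert (key n S) S \<in> F0 n" using insert_key_F0[OF S(1) assms] .
  then have "covers_in (F0 n) S (insert (key n S) S)"
    unfolding covers_in_def using S by blast
  then show "case p of (a, b) \<Rightarrow> covers_in (F0 n) a b" using S(3) by simp
next
  fix p q assume p: "p \<in> Mt n" and q: "q \<in> Mt n"
  show "p \<noteq> q \<longrightarrow> {fst p, snd p} \<inter> {fst q, snd q} = {}"
  proof
    assume pq: "p \<noteq> q"
    obtain S where S: "S \<in> F0 n" "key n S \<notin> S" "p = (S, insert (key n S) S)" using p unfolding Mt_def by blast
    obtain T where T: "T \<in> F0 n" "key n T \<notin> T" "q = (T, insert (key n T) T)" using q unfolding Mt_def by blast
    have 1: "S \<noteq> T" using pq S T by blast
    have 2: "S \<noteq> insert (key n T) T"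
    proof
      assume e: "S = insert (key n T) T"
      then have "key n S = key n T" using key_insert_key by simp
      then show False using S(2) e by simp
    qed
    have 3: "insert (key n S) S \<noteq> T"
    proof
      assume e: "insert (key n S) S = T"
      then have "key n T = key n S" using key_insert_key by metis
      then show False using T(2) e by auto
    qed
    have 4: "insert (key n S) S \<noteq> insert (key n T) T"
    proof
      assume e: "insert (key n S) S = insert (key n T) T"
      then have k: "key n S = key n T" using key_insert_key by metis
      have "S = insert (key n S) S - {key n S}" using S(2) by simp
      also have "\<dots> = insert (key n T) T - {key n T}" using e k by simp
      also have "\<dots> = T" using T(2) by simp
      finally show False using 1 by simp
    qed
    show "{fst p, snd p} \<inter> {fst q, snd q} = {}" using 1 2 3 4 S(3) T(3) by auto
  qed
qed

lemma maxpart_part: "n \<ge> 1 \<Longrightarrow> partition_on {1..n} (maxpart n)"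
  unfolding maxpart_def by (intro partition_on_space) simp

lemma alpha_F0: assumes "n \<ge> 3" shows "{alpha n} \<in> F0 n"
proof -
  have a: "alpha n = rr (maxpart n)" using rr_max assms by simp
  have "partition_on {1..n} (alpha n)" unfolding a using rr_part maxpart_part assms by simp
  moreover have "alpha n \<noteq> maxpart n" unfolding a using rr_not_max assms by simp
  moreover have "alpha n \<noteq> minpart n" using alpha_not_min assms by simp
  moreover have "alpha n \<notin> Vset n" unfolding a by (rule rr_not_V)
  ultimately show ?thesis unfolding F0_def simplices_def proper_part_def setpart_def
    using refines_refl by auto
qed

lemma key_UL_empty: assumes "S \<in> simplices n" "UL S = {}" "n \<ge> 2" shows "key n S = alpha n"
proof -
  have "W n S = {maxpart n}" using assms(2) unfolding W_def by simp
  then have "mn n S = maxpart n" using mn_unique[OF assms(1), of "maxpart n"] refines_refl by simp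
  then show ?thesis unfolding key_def using rr_max assms(3) by simp
qed

lemma key_alpha: assumes "n \<ge> 3" shows "key n {alpha n} = alpha n"
proof -
  have "{1} \<in> alpha n" unfolding alpha_def by simp
  then have "UL {alpha n} = {}" unfolding UL_def by simp
  then show ?thesis using key_UL_empty alpha_F0[OF assms] assms unfolding F0_def by simp
qed

lemma Mt_critical: assumes n: "n \<ge> 3" shows "critical (F0 n) (Mt n) = {{alpha n}}"
proof
  show "critical (F0 n) (Mt n) \<subseteq> {{alpha n}}"
  proof
    fix T assume "T \<in> critical (F0 n) (Mt n)"
    then have T: "T \<in> F0 n" "\<And>a b. (a, b) \<in> Mt n \<Longrightarrow> T \<noteq> a \<and> T \<noteq> b"
      unfolding critical_def by auto
    have Ts: "T \<in> simplices n" using T(1) unfolding F0_def by blast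
    have kin: "key n T \<in> T"
    proof (rule ccontr)
      assume "key n T \<notin> T"
      then have "(T, insert (key n T) T) \<in> Mt n" using T(1) unfolding Mt_def by blast
      then show False using T(2) by blast
    qed
    show "T \<in> {{alpha n}}"
    proof (cases "T - {key n T} = {}")
      case True
      then have Te: "T = {key n T}" using kin by blast
      then have "UL T = {}" using key_one[of n T] unfolding UL_def by auto
      then have "key n T = alpha n" using key_UL_empty[OF Ts] n by simp
      then show ?thesis using Te by simp
    next
      case False
      let ?S = "T - {key n T}"
      have SF: "?S \<in> F0 n" using F0_sub[OF T(1) _ False] by blast
      have ks: "key n ?S = key n T" by (rule key_remove_key)
      then have "key n ?S \<notin> ?S" by simp
      moreover have "insert (key n ?S) ?S = T" using ks kin by auto
      ultimately have "(?S, T) \<in> Mt n" using SF unfolding Mt_def by force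
      then show ?thesis using T(2) by blast
    qed
  qed
  show "{{alpha n}} \<subseteq> critical (F0 n) (Mt n)"
  proof -
    have "{alpha n} \<noteq> a \<and> {alpha n} \<noteq> b" if ab: "(a, b) \<in> Mt n" for a b
    proof -
      have a: "a \<in> F0 n" "key n a \<notin> a" "b = insert (key n a) a" using Mt_D[OF ab] by auto
      have "a \<noteq> {alpha n}" using a(2) key_alpha[OF n] by auto
      moreover have "b \<noteq> {alpha n}"
      proof
        assume "b = {alpha n}"
        then have "a \<subseteq> {alpha n}" using a(3) by blast
        moreover have "a \<noteq> {}" using a(1) unfolding F0_def simplices_def by blast
        ultimately have "a = {alpha n}" by blast
        then show False using \<open>a \<noteq> {alpha n}\<close> by simp
      qed
      ultimately show ?thesis by blast
    qed
    then show ?thesis using alpha_F0[OF n] unfolding critical_def by blast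
  qed
qed

lemma cyc_nat: fixes f :: "nat \<Rightarrow> nat"
  assumes "t \<ge> 1" "\<forall>i<t. f ((i + 1) mod t) < f i" shows False
proof -
  have "\<forall>j<t. f j + j \<le> f 0"
  proof (intro allI impI)
    fix j assume "j < t"
    then show "f j + j \<le> f 0"
    proof (induction j)
      case 0 then show ?case by simp
    next
      case (Suc j)
      have "f (Suc j) < f j" using assms(2) Suc.prems by (metis Suc_eq_plus1 Suc_lessD mod_less)
      then show ?case using Suc by simp
    qed
  qed
  moreover have "t - 1 < t" using assms(1) by simp
  ultimately have "f (t - 1) + (t - 1) \<le> f 0" by blast
  moreover have "f ((t - 1 + 1) mod t) < f (t - 1)" using assms(2) \<open>t - 1 < t\<close> by blast
  moreover have "(t - 1 + 1) mod t = 0" using assms(1) by simp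
  ultimately show False by simp
qed

definition Dn :: "nat \<Rightarrow> nat set set \<Rightarrow> nat" where
  "Dn n P = card {Q \<in> setpart n. refines Q P}"

lemma Dn_strict: assumes "partition_on {1..n} P" "partition_on {1..n} Q" "refines P Q" "P \<noteq> Q"
  shows "Dn n P < Dn n Q"
proof -
  have fin: "finite (setpart n)" unfolding setpart_def by (rule finitely_many_partition_on) simp
  have "{R \<in> setpart n. refines R P} \<subset> {R \<in> setpart n. refines R Q}"
  proof
    show "{R \<in> setpart n. refines R P} \<subseteq> {R \<in> setpart n. refines R Q}"
      using assms(3) refines_trans by blast
    have "Q \<in> {R \<in> setpart n. refines R Q}" using assms(2) refines_refl unfolding setpart_def by blast
    moreover have "Q \<notin> {R \<in> setpart n. refines R P}" using refines_antisym[OF assms(1,2,3)] assms(4) by blast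
    ultimately show "{R \<in> setpart n. refines R P} \<noteq> {R \<in> setpart n. refines R Q}" by blast
  qed
  then show ?thesis unfolding Dn_def by (rule psubset_card_mono[OF finite_subset[OF _ fin], rotated]) blast
qed

lemma Mt_acyclic: assumes n: "n \<ge> 3" shows "acyclic_matching (Mt n)"
  unfolding acyclic_matching_def
proof
  assume "\<exists>(t::nat) (a::nat \<Rightarrow> nat set set set) b. 2 \<le> t \<and> inj_on b {..<t} \<and> (\<forall>i<t. (a i, b i) \<in> Mt n \<and> a i \<subset> b ((i + 1) mod t))"
  then obtain t :: nat and a b where t: "2 \<le> t" and inj: "inj_on b {..<t}"
    and ab: "\<And>i. i < t \<Longrightarrow> (a i, b i) \<in> Mt n \<and> a i \<subset> b ((i + 1) mod t)" by blast
  define C where "C = Suc (card (Pow (Pow {1..n})))"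
  define pot where "pot S = Dn n (mn n S) * C + (C - card S)" for S
  have cardC: "card S < C" if "S \<in> F0 n" for S
  proof -
    have "S \<subseteq> Pow (Pow {1..n})" using that simplices_part part_sub unfolding F0_def by blast
    then have "card S \<le> card (Pow (Pow {1..n}))" by (rule card_mono[rotated]) simp
    then show ?thesis unfolding C_def by simp
  qed
  have step: "pot (a ((i + 1) mod t)) < pot (a i)" if i: "i < t" for i
  proof -
    define j where "j = (i + 1) mod t"
    have jt: "j < t" unfolding j_def using t by simp
    have ji: "j \<noteq> i"
    proof (cases "i + 1 < t")
      case True then have "j = i + 1" unfolding j_def by simp
      then show ?thesis by simp
    next
      case False then have "i + 1 = t" using i by simp
      then have "j = 0" "i \<noteq> 0" unfolding j_def using t by auto
      then show ?thesis by simp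
    qed
    have ai: "a i \<in> F0 n" "key n (a i) \<notin> a i" "b i = insert (key n (a i)) (a i)" using Mt_D ab[OF i] by auto
    have aj: "a j \<in> F0 n" "key n (a j) \<notin> a j" "b j = insert (key n (a j)) (a j)" using Mt_D ab[OF jt] by auto
    have sub: "a i \<subset> b j" using ab[OF i] unfolding j_def by blast
    have bjF: "b j \<in> F0 n" using insert_key_F0[OF aj(1) n] aj(3) by simp
    have bjs: "b j \<in> simplices n" using bjF unfolding F0_def by blast
    have ais: "a i \<in> simplices n" using ai(1) unfolding F0_def by blast
    have ajs: "a j \<in> simplices n" using aj(1) unfolding F0_def by blast
    have mnj: "mn n (b j) = mn n (a j)" unfolding aj(3) by (rule mn_UL[OF UL_insert_key])
    have "a i \<subseteq> b j" using sub by (rule psubset_imp_subset)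
    then have "W n (a i) \<subseteq> W n (b j)" unfolding W_def UL_def by blast
    then have "mn n (a i) \<in> W n (b j)" using mn_props(1)[OF ais] by blast
    then have "refines (mn n (b j)) (mn n (a i))" by (rule mn_props(2)[OF bjs])
    then have ref: "refines (mn n (a j)) (mn n (a i))" using mnj by simp
    show ?thesis
    proof (cases "mn n (a j) = mn n (a i)")
      case True
      then have k: "key n (a j) = key n (a i)" unfolding key_def by simp
      have "a i \<subseteq> insert (key n (a i)) (a j)" using sub aj(3) k by simp
      then have "a i \<subseteq> a j" using ai(2) by blast
      moreover have "a i \<noteq> a j"
      proof
        assume "a i = a j"
        then have "b i = b j" using ai(3) aj(3) by simp
        then show False using inj ji i jt unfolding inj_on_def by blast
      qed
      ultimately have "a i \<subset> a j" by blast
      then have "card (a i) < card (a j)"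
        by (rule psubset_card_mono[OF simplices_finite[OF ajs]])
      then show ?thesis unfolding pot_def j_def[symmetric] using True cardC[OF aj(1)] by simp
    next
      case False
      then have "Dn n (mn n (a j)) < Dn n (mn n (a i))"
        using Dn_strict[OF mn_props(3)[OF ajs] mn_props(3)[OF ais] ref] by blast
      then have "Suc (Dn n (mn n (a j))) * C \<le> Dn n (mn n (a i)) * C"
        by (intro mult_le_mono1) simp
      then have "Dn n (mn n (a j)) * C + C \<le> Dn n (mn n (a i)) * C" by simp
      then show ?thesis unfolding pot_def j_def[symmetric] using cardC[OF ai(1)] by simp
    qed
  qed
  show False using cyc_nat[of t "\<lambda>i. pot (a i)"] step t by simp
qed




lemma img_inj: "inj f \<Longrightarrow> inj (\<lambda>B. f ` B)"
  by (rule injI) (simp add: inj_image_eq_iff)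

lemma ap_inj: assumes "inj \<sigma>" "act_part \<sigma> P = act_part \<sigma> Q" shows "P = Q"
proof -
  have "inj (\<lambda>B. \<sigma> ` B)" using img_inj[OF assms(1)] .
  then have "inj (\<lambda>P. (\<lambda>B. \<sigma> ` B) ` P)" by (rule img_inj)
  then show ?thesis using assms(2) unfolding act_part_def inj_def by blast
qed

lemma stab1_D: assumes "\<sigma> \<in> stab1 n" shows "\<sigma> permutes {1..n} \<and> \<sigma> 1 = 1 \<and> inj \<sigma> \<and> \<sigma> ` {1..n} = {1..n}"
proof -
  have p: "\<sigma> permutes {1..n}" and o: "\<sigma> 1 = 1" using assms unfolding stab1_def by auto
  show ?thesis using p o permutes_inj[OF p] permutes_image[OF p] by simp
qed

lemma ap_part: assumes "\<sigma> \<in> stab1 n" "partition_on {1..n} P" shows "partition_on {1..n} (act_part \<sigma> P)"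
proof -
  note s = stab1_D[OF assms(1)]
  have "partition_on (\<sigma> ` {1..n}) ((`) \<sigma> ` P - {{}})"
  proof (rule partition_on_inj_image[OF assms(2)])
    show "inj_on \<sigma> {1..n}" using s inj_on_subset[of \<sigma> UNIV "{1..n}"] by simp
  qed
  moreover have "{} \<notin> (`) \<sigma> ` P"
  proof
    assume "{} \<in> (`) \<sigma> ` P"
    then obtain B where "B \<in> P" "\<sigma> ` B = {}" by blast
    then show False using partition_onD3[OF assms(2)] by simp
  qed
  then have "(`) \<sigma> ` P - {{}} = (`) \<sigma> ` P" by simp
  ultimately show ?thesis using s unfolding act_part_def by simp
qed

lemma ap_ref: assumes "inj \<sigma>" shows "refines (act_part \<sigma> P) (act_part \<sigma> Q) \<longleftrightarrow> refines P Q"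
  unfolding refines_def act_part_def by (simp add: inj_image_subset_iff[OF assms])

lemma ap_max: assumes "\<sigma> \<in> stab1 n" shows "act_part \<sigma> (maxpart n) = maxpart n"
  using stab1_D[OF assms] unfolding act_part_def maxpart_def by simp

lemma ap_min: assumes "\<sigma> \<in> stab1 n" shows "act_part \<sigma> (minpart n) = minpart n"
proof -
  have "act_part \<sigma> (minpart n) = (\<lambda>i. {i}) ` (\<sigma> ` {1..n})"
    unfolding act_part_def minpart_def image_image by simp
  then show ?thesis using stab1_D[OF assms] unfolding minpart_def by simp
qed

lemma img_one: assumes "inj \<sigma>" "\<sigma> 1 = 1" shows "\<sigma> ` B = {1} \<longleftrightarrow> B = {1}"
proof -
  have "\<sigma> ` {1} = {1}" using assms by simp
  then show ?thesis using inj_image_eq_iff[OF assms(1), of B "{1}"] by simp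
qed

lemma ap_one: assumes "inj \<sigma>" "\<sigma> 1 = 1" shows "{1} \<in> act_part \<sigma> P \<longleftrightarrow> {1} \<in> P"
proof
  assume "{1} \<in> act_part \<sigma> P"
  then obtain B where "B \<in> P" "\<sigma> ` B = {1}" unfolding act_part_def by blast
  then show "{1} \<in> P" using img_one[OF assms] by simp
next
  assume "{1} \<in> P"
  moreover have "\<sigma> ` {1} = {1}" using assms(2) by simp
  ultimately show "{1} \<in> act_part \<sigma> P" unfolding act_part_def by force
qed

lemma ap_rr: assumes "inj \<sigma>" "\<sigma> 1 = 1" shows "act_part \<sigma> (rr P) = rr (act_part \<sigma> P)"
proof -
  have h: "\<sigma> ` (B - {1}) = \<sigma> ` B - {1}" for B
    using image_set_diff[OF assms(1), of B "{1}"] assms(2) by simp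
  have "(`) \<sigma> ` ((\<lambda>B. B - {1}) ` P - {{}}) = (\<lambda>B. B - {1}) ` ((`) \<sigma> ` P) - {{}}"
  proof (rule set_eqI)
    fix x
    show "x \<in> (`) \<sigma> ` ((\<lambda>B. B - {1}) ` P - {{}}) \<longleftrightarrow> x \<in> (\<lambda>B. B - {1}) ` ((`) \<sigma> ` P) - {{}}"
    proof
      assume "x \<in> (`) \<sigma> ` ((\<lambda>B. B - {1}) ` P - {{}})"
      then obtain B where B: "B \<in> P" "B - {1} \<noteq> {}" "x = \<sigma> ` (B - {1})" by blast
      then have "x = \<sigma> ` B - {1}" "x \<noteq> {}" using h by auto
      then show "x \<in> (\<lambda>B. B - {1}) ` ((`) \<sigma> ` P) - {{}}" using B(1) by blast
    next
      assume "x \<in> (\<lambda>B. B - {1}) ` ((`) \<sigma> ` P) - {{}}"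
      then obtain B where B: "B \<in> P" "x = \<sigma> ` B - {1}" "x \<noteq> {}" by blast
      then have "x = \<sigma> ` (B - {1})" "B - {1} \<noteq> {}" using h by auto
      then show "x \<in> (`) \<sigma> ` ((\<lambda>B. B - {1}) ` P - {{}})" using B(1) by blast
    qed
  qed
  moreover have "\<sigma> ` {1} = {1}" using assms(2) by simp
  ultimately show ?thesis unfolding act_part_def rr_def by simp
qed

lemma ap_vpart: assumes "\<sigma> \<in> stab1 n" "k \<in> {2..n}" shows "act_part \<sigma> (vpart n k) = vpart n (\<sigma> k)"
proof -
  note s = stab1_D[OF assms(1)]
  have e: "{2..n} = {1..n} - {1}" by auto
  have s2: "\<sigma> ` {2..n} = {2..n}" unfolding e using image_set_diff[of \<sigma> "{1..n}" "{1}"] s by simp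
  have "\<sigma> ` ({2..n} - {k}) = {2..n} - {\<sigma> k}" using image_set_diff[of \<sigma> "{2..n}" "{k}"] s s2 by simp
  then have eq: "(\<lambda>x. {\<sigma> x}) ` ({2..n} - {k}) = (\<lambda>i. {i}) ` ({2..n} - {\<sigma> k})"
  proof -
    assume h: "\<sigma> ` ({2..n} - {k}) = {2..n} - {\<sigma> k}"
    have "(\<lambda>x. {\<sigma> x}) ` ({2..n} - {k}) = (\<lambda>i. {i}) ` (\<sigma> ` ({2..n} - {k}))"
      by (simp only: image_image)
    also have "\<dots> = (\<lambda>i. {i}) ` ({2..n} - {\<sigma> k})" by (simp only: h)
    finally show ?thesis .
  qed
  show ?thesis unfolding act_part_def vpart_def image_insert image_image using s eq by simp
qed

lemma stab1_inv: assumes "\<sigma> \<in> stab1 n" shows "inv \<sigma> \<in> stab1 n"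
proof -
  note s = stab1_D[OF assms]
  have "inv \<sigma> permutes {1..n}" using permutes_inv s by blast
  moreover have "inv \<sigma> 1 = 1" using s by (metis inv_f_f)
  ultimately show ?thesis unfolding stab1_def by blast
qed

lemma ap_inv: assumes "\<sigma> \<in> stab1 n" shows "act_part (inv \<sigma>) (act_part \<sigma> P) = P"
proof -
  have "inj \<sigma>" using stab1_D[OF assms] by blast
  then have "inv \<sigma> ` (\<sigma> ` B) = B" for B by (simp add: image_image)
  then show ?thesis unfolding act_part_def image_image by simp
qed

lemma ap_V1: assumes "\<sigma> \<in> stab1 n" "P \<in> Vset n" shows "act_part \<sigma> P \<in> Vset n"
proof -
  obtain k where k: "k \<in> {2..n}" "P = vpart n k" using assms(2) unfolding Vset_def by blast
  have "\<sigma> k \<in> {2..n}"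
  proof -
    have e: "{2..n} = {1..n} - {1}" by auto
    have "\<sigma> ` {2..n} = {2..n}" unfolding e using image_set_diff[of \<sigma> "{1..n}" "{1}"] stab1_D[OF assms(1)] by simp
    then show ?thesis using k(1) by blast
  qed
  then show ?thesis using ap_vpart[OF assms(1) k(1)] k(2) unfolding Vset_def by simp
qed

lemma ap_V: assumes "\<sigma> \<in> stab1 n" shows "act_part \<sigma> P \<in> Vset n \<longleftrightarrow> P \<in> Vset n"
  using ap_V1[OF assms] ap_V1[OF stab1_inv[OF assms], of "act_part \<sigma> P"] ap_inv[OF assms] by auto

lemma as_F0: assumes "\<sigma> \<in> stab1 n" "S \<in> F0 n" shows "act_simp \<sigma> S \<in> F0 n"
proof -
  note s = stab1_D[OF assms(1)]
  have "act_part \<sigma> x \<in> proper_part n" if "x \<in> proper_part n" for x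
  proof -
    have x: "partition_on {1..n} x" "x \<noteq> maxpart n" "x \<noteq> minpart n"
      using that unfolding proper_part_def setpart_def by auto
    have "act_part \<sigma> x \<noteq> maxpart n" using x(2) ap_inj[of \<sigma> x "maxpart n"] s ap_max[OF assms(1)] by auto
    moreover have "act_part \<sigma> x \<noteq> minpart n" using x(3) ap_inj[of \<sigma> x "minpart n"] s ap_min[OF assms(1)] by auto
    ultimately show ?thesis using ap_part[OF assms(1) x(1)] unfolding proper_part_def setpart_def by simp
  qed
  moreover have "act_part \<sigma> x \<notin> Vset n" if "x \<in> S" for x using that assms(2) ap_V[OF assms(1)] unfolding F0_def by blast
  moreover have "refines (act_part \<sigma> x) (act_part \<sigma> y) \<longleftrightarrow> refines x y" for x y using ap_ref s by blast
  ultimately show ?thesis using assms(2) unfolding F0_def simplices_def act_simp_def by auto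
qed

lemma UL_as: assumes "\<sigma> \<in> stab1 n" shows "UL (act_simp \<sigma> S) = act_simp \<sigma> (UL S)"
proof -
  have o: "\<And>P. {1} \<in> act_part \<sigma> P \<longleftrightarrow> {1} \<in> P" using ap_one stab1_D[OF assms] by blast
  show ?thesis unfolding UL_def act_simp_def using o by blast
qed

lemma W_as: assumes "\<sigma> \<in> stab1 n" shows "W n (act_simp \<sigma> S) = act_part \<sigma> ` W n S"
  unfolding W_def UL_as[OF assms] using ap_max[OF assms] unfolding act_simp_def by simp

lemma key_as: assumes "\<sigma> \<in> stab1 n" "S \<in> F0 n" shows "key n (act_simp \<sigma> S) = act_part \<sigma> (key n S)"
proof -
  note s = stab1_D[OF assms(1)]
  have S: "S \<in> simplices n" using assms(2) unfolding F0_def by blast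
  have S': "act_simp \<sigma> S \<in> simplices n" using as_F0[OF assms] unfolding F0_def by blast
  have "mn n (act_simp \<sigma> S) = act_part \<sigma> (mn n S)"
  proof (rule mn_unique[OF S'])
    show "act_part \<sigma> (mn n S) \<in> W n (act_simp \<sigma> S)" unfolding W_as[OF assms(1)] using mn_props(1)[OF S] by blast
    fix x assume "x \<in> W n (act_simp \<sigma> S)"
    then obtain y where y: "y \<in> W n S" "x = act_part \<sigma> y" unfolding W_as[OF assms(1)] by blast
    then show "refines (act_part \<sigma> (mn n S)) x" using mn_props(2)[OF S y(1)] ap_ref s by simp
  qed
  then show ?thesis unfolding key_def using ap_rr s by simp
qed

lemma Mt_I: "S \<in> F0 n \<Longrightarrow> key n S \<notin> S \<Longrightarrow> (S, insert (key n S) S) \<in> Mt n"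
  unfolding Mt_def by blast

lemma Mt_equiv: assumes "n \<ge> 3" shows "equivariant_matching (stab1 n) (Mt n)"
  unfolding equivariant_matching_def
proof (intro ballI)
  fix \<sigma> p assume sg: "\<sigma> \<in> stab1 n" and p: "p \<in> Mt n"
  obtain a b where pab: "p = (a, b)" by (cases p)
  have a0: "a \<in> F0 n \<and> key n a \<notin> a \<and> b = insert (key n a) a" using Mt_D p pab by simp
  have a: "a \<in> F0 n" "key n a \<notin> a" "p = (a, insert (key n a) a)" using a0 pab by auto
  note s = stab1_D[OF sg]
  have F: "act_simp \<sigma> a \<in> F0 n" using as_F0[OF sg a(1)] .
  have k: "key n (act_simp \<sigma> a) = act_part \<sigma> (key n a)" using key_as[OF sg a(1)] .
  have "key n (act_simp \<sigma> a) \<notin> act_simp \<sigma> a"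
  proof
    assume "key n (act_simp \<sigma> a) \<in> act_simp \<sigma> a"
    then have "act_part \<sigma> (key n a) \<in> act_part \<sigma> ` a" using k unfolding act_simp_def by simp
    then obtain x where "x \<in> a" "act_part \<sigma> (key n a) = act_part \<sigma> x" by (rule imageE) simp
    then have "key n a = x" using ap_inj[of \<sigma> "key n a" x] s by simp
    then show False using a(2) \<open>x \<in> a\<close> by simp
  qed
  then have m: "(act_simp \<sigma> a, insert (key n (act_simp \<sigma> a)) (act_simp \<sigma> a)) \<in> Mt n"
    by (rule Mt_I[OF F])
  have "act_simp \<sigma> (insert (key n a) a) = insert (key n (act_simp \<sigma> a)) (act_simp \<sigma> a)"
    using k by (simp add: act_simp_def)
  then show "case p of (a, b) \<Rightarrow> (act_simp \<sigma> a, act_simp \<sigma> b) \<in> Mt n"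
    using a(3) m by simp
qed

theorem lemma12:
  fixes n :: nat
  assumes "n \<ge> 3"
  shows "\<exists>M. partial_matching (F0 n) M \<and> acyclic_matching M \<and>
             equivariant_matching (stab1 n) M \<and>
             critical (F0 n) M = {{alpha n}}"
  by (rule exI[of _ "Mt n"]) (intro conjI Mt_partial[OF assms] Mt_acyclic[OF assms] Mt_equiv[OF assms] Mt_critical[OF assms])


end
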